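(* Let $\mathbb D$ be an arbitrary commutative ring with identity, and write $\mathbb D$ also for its additive group. (1) For each integer $n\ge1$, $$TS\mathcal R_n(\mathbb D)^{ab}\cong TS\mathcal A_1(\mathbb D)\times T\mathcal J_n(\mathbb D)^{ab}\cong \mathbb D\times T\mathcal J_n(\mathbb D)^{ab}.$$ (2) Considering $S\mathcal R(\mathbb D)$ and $\mathcal J(\mathbb D)$ as abstract groups, $$S\mathcal R(\mathbb D)^{ab}\cong\mathbb D\times\mathcal J(\mathbb D)^{ab}.$$
   Context: The Riordan group over $\mathbb D$ consists of pairs $(g,f)$ of formal power series $g=\sum_{k\ge0}g_kt^k$, $f=\sum_{k\ge1}f_kt^k$ in $\mathbb D[[t]]$ with $g_0,f_1$ units, identified with the lower triangular matrices $(d_{n,k})_{n,k\ge0}$, $d_{n,k}=[t^n]g f^k$; the product is $(g_1,f_1)(g_2,f_2)=(g_1\cdot(g_2\circ f_1),\,f_2\circ f_1)$, identity $(1,t)$. $S\mathcal R(\mathbb D)$ is the subgroup of pairs with $g_0=1$ and $f_1=1$. $\mathcal J(\mathbb D)$ is the subgroup $\{(1,f): f=t+f_2t^2+\cdots\}$ (the group of formal power series under substitution), and $S\mathcal A(\mathbb D)=\{(g,t):g_0=1\}$. For $n\ge0$, $TS\mathcal R_n(\mathbb D)$, $T\mathcal J_n(\mathbb D)$, $TS\mathcal A_n(\mathbb D)$ denote the groups of $(n+1)\times(n+1)$ upper-left truncations $(d_{i,j})_{0\le i,j\le n}$ of elements of $S\mathcal R(\mathbb D)$, $\mathcal J(\mathbb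 D)$, $S\mathcal A(\mathbb D)$ respectively; in particular $TS\mathcal A_1(\mathbb D)=\{\begin{pmatrix}1&0\\\alpha&1\end{pmatrix}\}\cong\mathbb D$. $G^{ab}=G/[G,G]$ denotes the abelianization (abstract commutator subgroup). *)

theory Defs
  imports "HOL-Algebra.Algebra" "HOL-Computational_Algebra.Formal_Power_Series"
begin

definition abelianization :: "('a, 'b) monoid_scheme \<Rightarrow> 'a set monoid" where
  "abelianization G = G Mod (derived G (carrier G))"

definition additive_group :: "('a::comm_ring_1) monoid" where
  "additive_group = \<lparr>carrier = UNIV, monoid.mult = (+), one = 0\<rparr>"

definition riordan_mult :: "('a::comm_ring_1 fps \<times> 'a fps) \<Rightarrow> ('a fps \<times> 'a fps) \<Rightarrow> ('a fps \<times> 'a fps)" where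
  "riordan_mult p q = (fst p * (fst q oo snd p), snd q oo snd p)"

definition SR_carrier :: "('a::comm_ring_1 fps \<times> 'a fps) set" where
  "SR_carrier = {(g, f). fps_nth g 0 = 1 \<and> fps_nth f 0 = 0 \<and> fps_nth f 1 = 1}"

definition J_carrier :: "('a::comm_ring_1 fps \<times> 'a fps) set" where
  "J_carrier = {(g, f). g = 1 \<and> fps_nth f 0 = 0 \<and> fps_nth f 1 = 1}"

definition SA_carrier :: "('a::comm_ring_1 fps \<times> 'a fps) set" where
  "SA_carrier = {(g, f). fps_nth g 0 = 1 \<and> f = fps_X}"

definition riordan_group_on :: "('a::comm_ring_1 fps \<times> 'a fps) set \<Rightarrow> ('a fps \<times> 'a fps) monoid" where
  "riordan_group_on S = \<lparr>carrier = S, monoid.mult = riordan_mult, one = (1, fps_X)\<rparr>"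

abbreviation SR_group :: "('a::comm_ring_1 fps \<times> 'a fps) monoid" where
  "SR_group \<equiv> riordan_group_on SR_carrier"

abbreviation J_group :: "('a::comm_ring_1 fps \<times> 'a fps) monoid" where
  "J_group \<equiv> riordan_group_on J_carrier"

definition riordan_trunc :: "nat \<Rightarrow> ('a::comm_ring_1 fps \<times> 'a fps) \<Rightarrow> (nat \<Rightarrow> nat \<Rightarrow> 'a)" where
  "riordan_trunc n p = (\<lambda>i j. if i \<le> n \<and> j \<le> n then fps_nth (fst p * snd p ^ j) i else 0)"

definition trunc_mat_mult :: "nat \<Rightarrow> (nat \<Rightarrow> nat \<Rightarrow> 'a::comm_ring_1) \<Rightarrow> (nat \<Rightarrow> nat \<Rightarrow> 'a) \<Rightarrow> (nat \<Rightarrow> nat \<Rightarrow> 'a)" where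
  "trunc_mat_mult n A B = (\<lambda>i j. if i \<le> n \<and> j \<le> n then (\<Sum>k\<le>n. A i k * B k j) else 0)"

definition trunc_mat_one :: "nat \<Rightarrow> (nat \<Rightarrow> nat \<Rightarrow> 'a::comm_ring_1)" where
  "trunc_mat_one n = (\<lambda>i j. if i \<le> n \<and> j \<le> n \<and> i = j then 1 else 0)"

definition trunc_group :: "nat \<Rightarrow> ('a::comm_ring_1 fps \<times> 'a fps) set \<Rightarrow> (nat \<Rightarrow> nat \<Rightarrow> 'a) monoid" where
  "trunc_group n S = \<lparr>carrier = riordan_trunc n ` S, monoid.mult = trunc_mat_mult n, one = trunc_mat_one n\<rparr>"

abbreviation TSR :: "nat \<Rightarrow> (nat \<Rightarrow> nat \<Rightarrow> 'a::comm_ring_1) monoid" where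
  "TSR n \<equiv> trunc_group n SR_carrier"
abbreviation TJ :: "nat \<Rightarrow> (nat \<Rightarrow> nat \<Rightarrow> 'a::comm_ring_1) monoid" where
  "TJ n \<equiv> trunc_group n J_carrier"
abbreviation TSA :: "nat \<Rightarrow> (nat \<Rightarrow> nat \<Rightarrow> 'a::comm_ring_1) monoid" where
  "TSA n \<equiv> trunc_group n SA_carrier"

end

theory Submission
  imports Defs
begin

unbundle fps_syntax



lemma product_composition_lemma':
  assumes c0: "c$0 = (0::'a::comm_ring_1)"
    and d0: "d$0 = 0"
  shows "((a oo c) * (b oo d))$n =
    sum (\<lambda>(k,m). a$k * b$m * (c^k * d^m) $ n) {(k,m). k + m \<le> n}"  (is "?l = ?r")
proof -
  let ?S = "{(k::nat, m::nat). k + m \<le> n}"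
  have s: "?S \<subseteq> {0..n} \<times> {0..n}" by (simp add: subset_eq)
  have f: "finite {(k::nat, m::nat). k + m \<le> n}"
    by (auto intro: finite_subset[OF s])
  have "?r = (\<Sum>(k, m) \<in> {(k, m). k + m \<le> n}. \<Sum>j = 0..n. a $ k * b $ m * (c ^ k $ j * d ^ m $ (n - j)))"
    by (simp add: fps_mult_nth sum_distrib_left)
  also have "\<dots> = (\<Sum>i = 0..n. \<Sum>(k,m)\<in>{(k,m). k+m \<le> n}. a $ k * c ^ k $ i * b $ m * d ^ m $ (n-i))"
    unfolding sum.swap [where A = "{0..n}"] by (auto simp add: field_simps intro: sum.cong)
  also have "... = (\<Sum>i = 0..n.
                    \<Sum>q = 0..i. \<Sum>j = 0..n - i. a $ q * c ^ q $ i * (b $ j * d ^ j $ (n - i)))"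
    apply (rule sum.cong [OF refl])
    apply (simp add: sum.cartesian_product mult.assoc)
    apply (rule sum.mono_neutral_right[OF f], force)
    by clarsimp (metis c0 d0 leI startsby_zero_power_prefix mult_zero_left mult_zero_right)
  also have "\<dots> = ?l"
    by (simp add: fps_mult_nth fps_compose_nth sum_product)
  finally show ?thesis by simp
qed

lemma fps_compose_mult_distrib':
  assumes c0: "c $ 0 = (0::'a::comm_ring_1)"
  shows "(a * b) oo c = (a oo c) * (b oo c)"
proof -
  have "((a oo c) * (b oo c))$n = sum (\<lambda>s. sum (\<lambda>i. a$i * b$(s - i) * (c^s) $ n) {0..s}) {0..n}" for n
  unfolding product_composition_lemma'[OF c0 c0] power_add[symmetric]
  unfolding sum_pair_less_iff[where a = "\<lambda>k. a$k" and b="\<lambda>m. b$m" and c="\<lambda>s. (c ^ s)$n" and n = n] ..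
  then show ?thesis
   by (simp add: fps_eq_iff fps_compose_nth fps_mult_nth sum_distrib_right)
qed

lemma fps_compose_prod_distrib':
  assumes c0: "c$0 = (0::'a::comm_ring_1)"
  shows "prod a S oo c = prod (\<lambda>k. a k oo c) S"
proof (induct S rule: infinite_finite_induct)
next
  case (insert)
  then show ?case   
    by (simp add: fps_compose_mult_distrib'[OF c0])
qed auto

lemma fps_compose_power':
  assumes c0: "c$0 = (0::'a::comm_ring_1)"
  shows "(a oo c)^n = a^n oo c"
  by (induct n) (simp_all add: fps_compose_mult_distrib'[OF c0])

lemma fps_compose_assoc':
  assumes c0: "c$0 = (0::'a::comm_ring_1)"
    and b0: "b$0 = 0"
  shows "a oo (b oo c) = a oo b oo c" (is "?l = ?r")
proof -
  have "?l$n = ?r$n" for n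
  proof -
    have "?l$n = (sum (\<lambda>i. (fps_const (a$i) * b^i) oo c) {0..n})$n"
      by (simp add: fps_compose_nth fps_compose_power'[OF c0] fps_const_mult_apply_left
        sum_distrib_left mult.assoc fps_sum_nth)
    also have "\<dots> = ((sum (\<lambda>i. fps_const (a$i) * b^i) {0..n}) oo c)$n"
      by (simp add: fps_compose_sum_distrib)
    also have "... = (\<Sum>i = 0..n. \<Sum>j = 0..n. a $ j * (b ^ j $ i * c ^ i $ n))"
      by (simp add: fps_compose_nth fps_sum_nth sum_distrib_right mult.assoc)
    also have "... = (\<Sum>i = 0..n. \<Sum>j = 0..i. a $ j * (b ^ j $ i * c ^ i $ n))"
      by (intro sum.cong [OF refl] sum.mono_neutral_right; simp add: b0 startsby_zero_power_prefix)
    also have "\<dots> = ?r$n"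
      by (simp add: fps_compose_nth  sum_distrib_right mult.assoc)
    finally show ?thesis .
  qed
  then show ?thesis
    by (simp add: fps_eq_iff)
qed

fun cinv :: "'a fps \<Rightarrow> nat \<Rightarrow> 'a::comm_ring_1"
where
  "cinv a 0 = 0"
| "cinv a (Suc n) = fps_X$ Suc n - sum (\<lambda>i. (cinv a i) * (a^i)$Suc n) {0 .. n}"

definition "finv a = Abs_fps (cinv a)"

lemma finv:
  assumes a0: "a$0 = 0"
    and a1: "a$1 = (1::'a::comm_ring_1)"
  shows "finv a oo a = fps_X"
proof -
  let ?i = "finv a oo a"
  have "?i $n = fps_X$n" for n
  proof (cases n)
      case 0
      then show ?thesis using a0
        by (simp add: fps_compose_nth finv_def)
    next
      case (Suc n1)
      have "?i $ n = sum (\<lambda>i. (finv a $ i) * (a^i)$n) {0 .. n1} + finv a $ Suc n1 * (a $ 1)^ Suc n1"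
        by (simp only: fps_compose_nth) (simp add: Suc startsby_zero_power_nth_same [OF a0] del: power_Suc)
      also have "\<dots> = sum (\<lambda>i. (finv a $ i) * (a^i)$n) {0 .. n1} +
        (fps_X$ Suc n1 - sum (\<lambda>i. (finv a $ i) * (a^i)$n) {0 .. n1})"
        using a0 a1 Suc by (simp add: finv_def)
      also have "\<dots> = fps_X$n" using Suc by simp
      finally show ?thesis .
  qed
  then show ?thesis
    by (simp add: fps_eq_iff)
qed

lemma finv_01:
  assumes a0: "a$0 = 0" and a1: "a$1 = (1::'a::comm_ring_1)"
  shows "finv a $ 0 = 0" "finv a $ 1 = 1"
  using a0 a1 by (simp_all add: finv_def)

lemma finv_right:
  assumes a0: "a$0 = 0" and a1: "a$1 = (1::'a::comm_ring_1)"
  shows "a oo finv a = fps_X"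
proof -
  let ?k = "finv a"
  have k0: "?k$0 = 0" and k1: "?k$1 = 1" using finv_01[OF a0 a1] by auto
  have kk: "finv ?k oo ?k = fps_X" using finv[OF k0 k1] .
  have "a = fps_X oo a" using a0 by simp
  also have "\<dots> = (finv ?k oo ?k) oo a" by (simp add: kk)
  also have "\<dots> = finv ?k oo (?k oo a)" using fps_compose_assoc'[OF a0 k0] by simp
  also have "\<dots> = finv ?k" by (simp add: finv[OF a0 a1])
  finally have "a = finv ?k" .
  then show ?thesis using kk by simp
qed




lemma abel_decomp:
  fixes G :: "('a, 'b) monoid_scheme" and A :: "('c, 'd) monoid_scheme"
  assumes grp: "group G" and JG: "subgroup J G" and Acg: "comm_group A"
    and alpha: "\<alpha> \<in> hom G A" and alpha_surj: "\<alpha> ` carrier G = carrier A"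
    and rho: "\<rho> \<in> hom G (G\<lparr>carrier := J\<rparr>)"
    and rho_id: "\<And>x. x \<in> J \<Longrightarrow> \<rho> x = x"
    and alpha_J: "\<And>x. x \<in> J \<Longrightarrow> \<alpha> x = \<one>\<^bsub>A\<^esub>"
    and key: "\<And>x. x \<in> carrier G \<Longrightarrow> \<alpha> x = \<one>\<^bsub>A\<^esub> \<Longrightarrow> \<rho> x = \<one>\<^bsub>G\<^esub> \<Longrightarrow> x \<in> derived G (carrier G)"
  shows "abelianization G \<cong> A \<times>\<times> abelianization (G\<lparr>carrier := J\<rparr>)"
proof -
  interpret G: group G by (rule grp)
  interpret A: comm_group A by (rule Acg)
  define H where "H = G\<lparr>carrier := J\<rparr>"
  have Hg: "group H" unfolding H_def by (rule G.subgroup_imp_group[OF JG])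
  interpret H: group H by (rule Hg)
  have cH: "carrier H = J" by (simp add: H_def)
  have mH: "\<And>x y. x \<otimes>\<^bsub>H\<^esub> y = x \<otimes>\<^bsub>G\<^esub> y" by (simp add: H_def)
  have oneH: "\<one>\<^bsub>H\<^esub> = \<one>\<^bsub>G\<^esub>" by (simp add: H_def)
  have JsubG: "J \<subseteq> carrier G" using JG subgroup.subset by blast
  define N where "N = derived H (carrier H)"
  have Nnorm: "N \<lhd> H" unfolding N_def by (rule H.derived_self_is_normal)
  interpret N: normal N H by (rule Nnorm)
  define Q where "Q = H Mod N"
  have Qcg: "comm_group Q" unfolding Q_def N_def by (rule H.derived_quot_is_comm_group)
  interpret Q: comm_group Q by (rule Qcg)
  have NG: "N = derived G J" unfolding N_def cH unfolding H_def by (rule G.derived_consistent[OF subset_refl JG])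
  have NsubD: "N \<subseteq> derived G (carrier G)" unfolding NG by (rule G.mono_derived[OF JsubG])
  define T where "T = A \<times>\<times> Q"
  have Tg: "group T" unfolding T_def by (rule DirProd_group) (rule A.is_group, rule Q.is_group)
  have Tcg: "comm_group T"
    using Tg A.m_comm Q.m_comm by (intro group.group_comm_groupI) (auto simp: T_def)
  interpret T: comm_group T by (rule Tcg)
  have rhoJ: "\<And>x. x \<in> carrier G \<Longrightarrow> \<rho> x \<in> J" using rho by (auto simp: hom_def)
  have rho_mult: "\<And>x y. x \<in> carrier G \<Longrightarrow> y \<in> carrier G \<Longrightarrow> \<rho> (x \<otimes>\<^bsub>G\<^esub> y) = \<rho> x \<otimes>\<^bsub>G\<^esub> \<rho> y"
    using rho by (auto simp: hom_def)
  interpret rh: group_hom G H \<rho>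
    using rho by (unfold_locales) (simp add: H_def)
  interpret al: group_hom G A \<alpha>
    using alpha by (unfold_locales) simp
  have rho_inv: "\<And>x. x \<in> carrier G \<Longrightarrow> \<rho> (inv\<^bsub>G\<^esub> x) = inv\<^bsub>G\<^esub> (\<rho> x)"
  proof -
    fix x assume x: "x \<in> carrier G"
    have "\<rho> (inv\<^bsub>G\<^esub> x) = inv\<^bsub>H\<^esub> (\<rho> x)" using rh.hom_inv[OF x] .
    also have "\<dots> = inv\<^bsub>G\<^esub> (\<rho> x)" unfolding H_def using G.m_inv_consistent[OF JG rhoJ[OF x]] .
    finally show "\<rho> (inv\<^bsub>G\<^esub> x) = inv\<^bsub>G\<^esub> (\<rho> x)" .
  qed
  define \<Psi> where "\<Psi> x = (\<alpha> x, N #>\<^bsub>H\<^esub> \<rho> x)" for x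
  have cos_hom: "(\<lambda>a. N #>\<^bsub>H\<^esub> a) \<in> hom H Q" unfolding Q_def by (rule N.r_coset_hom_Mod)
  have Psi_hom: "\<Psi> \<in> hom G T"
  proof (rule homI)
    fix x assume x: "x \<in> carrier G"
    have "N #>\<^bsub>H\<^esub> \<rho> x \<in> carrier Q" using cos_hom rhoJ[OF x] cH by (auto simp: hom_def)
    then show "\<Psi> x \<in> carrier T" using x alpha by (auto simp: \<Psi>_def T_def hom_def)
  next
    fix x y assume x: "x \<in> carrier G" and y: "y \<in> carrier G"
    have "N #>\<^bsub>H\<^esub> \<rho> (x \<otimes>\<^bsub>G\<^esub> y) = N #>\<^bsub>H\<^esub> (\<rho> x \<otimes>\<^bsub>H\<^esub> \<rho> y)" by (simp add: rho_mult x y mH)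
    also have "\<dots> = (N #>\<^bsub>H\<^esub> \<rho> x) \<otimes>\<^bsub>Q\<^esub> (N #>\<^bsub>H\<^esub> \<rho> y)"
      using cos_hom rhoJ[OF x] rhoJ[OF y] cH by (auto simp: hom_def)
    finally show "\<Psi> (x \<otimes>\<^bsub>G\<^esub> y) = \<Psi> x \<otimes>\<^bsub>T\<^esub> \<Psi> y"
      using x y by (simp add: \<Psi>_def T_def)
  qed
  interpret Ps: group_hom G T \<Psi>
    using Psi_hom by (unfold_locales) simp
  have surj: "\<Psi> ` carrier G = carrier T"
  proof
    show "\<Psi> ` carrier G \<subseteq> carrier T" using Psi_hom by (auto simp: hom_def)
  next
    show "carrier T \<subseteq> \<Psi> ` carrier G"
    proof
      fix t assume t: "t \<in> carrier T"
      then obtain d q where te: "t = (d, q)" and d: "d \<in> carrier A" and q: "q \<in> carrier Q"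
        by (auto simp: T_def)
      obtain j where j: "j \<in> J" and qj: "q = N #>\<^bsub>H\<^esub> j"
        using q by (auto simp: Q_def FactGroup_def RCOSETS_def cH)
      obtain x0 where x0: "x0 \<in> carrier G" and dx: "d = \<alpha> x0" using d alpha_surj by auto
      have jG: "j \<in> carrier G" using j JsubG by auto
      have r0: "\<rho> x0 \<in> carrier G" using rhoJ[OF x0] JsubG by auto
      define y where "y = x0 \<otimes>\<^bsub>G\<^esub> inv\<^bsub>G\<^esub> (\<rho> x0) \<otimes>\<^bsub>G\<^esub> j"
      have yG: "y \<in> carrier G" using x0 r0 jG by (simp add: y_def)
      have "\<rho> y = \<rho> x0 \<otimes>\<^bsub>G\<^esub> inv\<^bsub>G\<^esub> (\<rho> (\<rho> x0)) \<otimes>\<^bsub>G\<^esub> \<rho> j"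
        using x0 r0 jG by (simp add: y_def rho_mult rho_inv del: rh.hom_mult rh.hom_inv)
      also have "\<dots> = j" using rho_id[OF j] rho_id[OF rhoJ[OF x0]] r0 jG by simp
      finally have ry: "\<rho> y = j" .
      have "\<alpha> y = \<alpha> x0 \<otimes>\<^bsub>A\<^esub> inv\<^bsub>A\<^esub> (\<alpha> (\<rho> x0)) \<otimes>\<^bsub>A\<^esub> \<alpha> j"
        using x0 r0 jG by (simp add: y_def)
      also have "\<dots> = d" using alpha_J[OF j] alpha_J[OF rhoJ[OF x0]] dx x0 by simp
      finally have ay: "\<alpha> y = d" .
      show "t \<in> \<Psi> ` carrier G" using yG ry ay by (auto simp: te qj \<Psi>_def)
    qed
  qed
  have ker: "kernel G T \<Psi> = derived G (carrier G)"
  proof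
    show "kernel G T \<Psi> \<subseteq> derived G (carrier G)"
    proof
      fix x assume "x \<in> kernel G T \<Psi>"
      then have x: "x \<in> carrier G" and ax: "\<alpha> x = \<one>\<^bsub>A\<^esub>" and cx: "N #>\<^bsub>H\<^esub> \<rho> x = N"
        by (auto simp: kernel_def \<Psi>_def T_def Q_def)
      have rxN: "\<rho> x \<in> N" using H.coset_join1[OF cx] rhoJ[OF x] cH N.subgroup_axioms by auto
      have r0: "\<rho> x \<in> carrier G" using rhoJ[OF x] JsubG by auto
      define z where "z = x \<otimes>\<^bsub>G\<^esub> inv\<^bsub>G\<^esub> (\<rho> x)"
      have zG: "z \<in> carrier G" using x r0 by (simp add: z_def)
      have "\<rho> z = \<rho> x \<otimes>\<^bsub>G\<^esub> inv\<^bsub>G\<^esub> (\<rho> (\<rho> x))" using x r0 by (simp add: z_def rho_mult rho_inv del: rh.hom_mult rh.hom_inv)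
      also have "\<dots> = \<one>\<^bsub>G\<^esub>" using rho_id[OF rhoJ[OF x]] r0 by simp
      finally have rz: "\<rho> z = \<one>\<^bsub>G\<^esub>" .
      have az: "\<alpha> z = \<one>\<^bsub>A\<^esub>" using x r0 ax alpha_J[OF rhoJ[OF x]] by (simp add: z_def)
      have zD: "z \<in> derived G (carrier G)" using key[OF zG az rz] .
      have xe: "x = z \<otimes>\<^bsub>G\<^esub> \<rho> x" using x r0 by (simp add: z_def G.m_assoc)
      have sD: "subgroup (derived G (carrier G)) G" by (rule G.derived_is_subgroup) simp
      show "x \<in> derived G (carrier G)"
      proof -
        have "\<rho> x \<in> derived G (carrier G)" using rxN NsubD by blast
        then have "z \<otimes>\<^bsub>G\<^esub> \<rho> x \<in> derived G (carrier G)"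
          using zD subgroup.m_closed[OF sD] by blast
        then show ?thesis using xe by simp
      qed
    qed
  next
    show "derived G (carrier G) \<subseteq> kernel G T \<Psi>"
    proof
      fix x assume xD: "x \<in> derived G (carrier G)"
      have x: "x \<in> carrier G" using xD G.derived_in_carrier by blast
      have "\<Psi> ` derived G (carrier G) = derived T (\<Psi> ` carrier G)"
        using Ps.derived_img[of "carrier G"] by simp
      also have "\<dots> = {\<one>\<^bsub>T\<^esub>}" unfolding surj by (rule T.derived_eq_singleton) simp
      finally have "\<Psi> x = \<one>\<^bsub>T\<^esub>" using xD by auto
      then show "x \<in> kernel G T \<Psi>" using x by (simp add: kernel_def)
    qed
  qed
  have "G Mod derived G (carrier G) \<cong> T" using Ps.FactGroup_iso[OF surj] ker by simp
  then show ?thesis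
    unfolding abelianization_def T_def Q_def N_def H_def by simp
qed




lemma SR_mem: "(g, f) \<in> SR_carrier \<longleftrightarrow> g$0 = 1 \<and> f$0 = 0 \<and> f$1 = 1"
  by (simp add: SR_carrier_def)

lemma J_mem: "(g, f) \<in> J_carrier \<longleftrightarrow> g = 1 \<and> f$0 = 0 \<and> f$1 = 1"
  by (simp add: J_carrier_def)

lemma SR_mult: "(g1, f1) \<otimes>\<^bsub>riordan_group_on S\<^esub> (g2, f2) = (g1 * (g2 oo f1), f2 oo f1)"
  by (simp add: riordan_group_on_def riordan_mult_def)

lemma SR_one: "\<one>\<^bsub>riordan_group_on S\<^esub> = (1, fps_X)"
  by (simp add: riordan_group_on_def)

lemma SR_carrier_eq: "carrier (riordan_group_on S) = S"
  by (simp add: riordan_group_on_def)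

lemma compose_nth1:
  assumes "f$0 = (0::'a::comm_ring_1)"
  shows "(g oo f)$1 = g$1 * f$1"
  using assms by (simp add: fps_compose_nth numeral_2_eq_2)

lemma compose_nth1':
  assumes "f$0 = (0::'a::comm_ring_1)"
  shows "(g oo f)$Suc 0 = g$Suc 0 * f$Suc 0"
  using compose_nth1[OF assms] by simp

lemma SR_closed:
  assumes "p \<in> (SR_carrier :: ('a::comm_ring_1 fps \<times> 'a fps) set)" "q \<in> SR_carrier"
  shows "riordan_mult p q \<in> SR_carrier"
  using assms by (cases p, cases q) (auto simp: SR_mem riordan_mult_def compose_nth1')

lemma SR_group_is_group: "group (SR_group :: ('a::comm_ring_1 fps \<times> 'a fps) monoid)"
proof (rule groupI)
  fix x y :: "'a fps \<times> 'a fps"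
  assume "x \<in> carrier SR_group" "y \<in> carrier SR_group"
  then show "x \<otimes>\<^bsub>SR_group\<^esub> y \<in> carrier SR_group"
    using SR_closed[of x y] by (simp add: riordan_group_on_def)
next
  show "\<one>\<^bsub>SR_group\<^esub> \<in> carrier (SR_group :: ('a fps \<times> 'a fps) monoid)"
    by (simp add: riordan_group_on_def SR_mem)
next
  fix x y z :: "'a fps \<times> 'a fps"
  assume "x \<in> carrier SR_group" "y \<in> carrier SR_group" "z \<in> carrier SR_group"
  then show "x \<otimes>\<^bsub>SR_group\<^esub> y \<otimes>\<^bsub>SR_group\<^esub> z = x \<otimes>\<^bsub>SR_group\<^esub> (y \<otimes>\<^bsub>SR_group\<^esub> z)"
    by (cases x, cases y, cases z)
       (simp add: SR_mult SR_carrier_eq SR_mem fps_compose_mult_distrib' fps_compose_assoc' mult.assoc)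
next
  fix x :: "'a fps \<times> 'a fps"
  assume "x \<in> carrier SR_group"
  then show "\<one>\<^bsub>SR_group\<^esub> \<otimes>\<^bsub>SR_group\<^esub> x = x"
    by (cases x) (simp add: SR_mult SR_one)
next
  fix x :: "'a fps \<times> 'a fps"
  assume x: "x \<in> carrier SR_group"
  obtain g f where xe: "x = (g, f)" by (cases x)
  have g0: "g$0 = 1" and f0: "f$0 = 0" and f1: "f$1 = 1" using x xe by (auto simp: SR_carrier_eq SR_mem)
  define k where "k = finv f"
  have k0: "k$0 = 0" and k1: "k$1 = 1" using finv_01[OF f0 f1] k_def by auto
  define h where "h = fps_right_inverse (g oo k) 1"
  have h: "(g oo k) * h = 1" unfolding h_def by (rule fps_right_inverse) (simp add: g0)
  have h0: "h$0 = 1" by (simp add: h_def)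
  show "\<exists>y\<in>carrier SR_group. y \<otimes>\<^bsub>SR_group\<^esub> x = \<one>\<^bsub>SR_group\<^esub>"
  proof (intro bexI[of _ "(h, k)"])
    show "(h, k) \<otimes>\<^bsub>SR_group\<^esub> x = \<one>\<^bsub>SR_group\<^esub>"
      using h finv_right[OF f0 f1] by (simp add: xe SR_mult SR_one k_def mult.commute)
    show "(h, k) \<in> carrier SR_group" using h0 k0 k1 by (simp add: SR_carrier_eq SR_mem)
  qed
qed

lemma J_sub_SR: "J_carrier \<subseteq> SR_carrier"
  by (auto simp: J_carrier_def SR_carrier_def)

lemma J_subgroup: "subgroup (J_carrier :: ('a::comm_ring_1 fps \<times> 'a fps) set) SR_group"
proof -
  interpret G: group "SR_group :: ('a fps \<times> 'a fps) monoid" by (rule SR_group_is_group)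
  show ?thesis
  proof (rule G.subgroupI)
    show "J_carrier \<subseteq> carrier (SR_group :: ('a fps \<times> 'a fps) monoid)"
      using J_sub_SR by (simp add: SR_carrier_eq)
    show "(J_carrier :: ('a fps \<times> 'a fps) set) \<noteq> {}"
      using J_mem[of 1 "fps_X :: 'a fps"] by auto
  next
    fix a :: "'a fps \<times> 'a fps" assume a: "a \<in> J_carrier"
    obtain f where ae: "a = (1, f)" and f0: "f$0 = 0" and f1: "f$1 = 1" using a by (cases a) (auto simp: J_mem)
    have "inv\<^bsub>SR_group\<^esub> a = (1, finv f)"
    proof (rule G.inv_equality)
      show "(1, finv f) \<otimes>\<^bsub>SR_group\<^esub> a = \<one>\<^bsub>SR_group\<^esub>"
        by (simp add: ae SR_mult SR_one finv_right[OF f0 f1])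
      show "a \<in> carrier SR_group" using a J_sub_SR by (auto simp: SR_carrier_eq)
      show "(1, finv f) \<in> carrier SR_group" using finv_01[OF f0 f1] by (simp add: SR_carrier_eq SR_mem)
    qed
    then show "inv\<^bsub>SR_group\<^esub> a \<in> J_carrier" using finv_01[OF f0 f1] by (simp add: J_mem)
  next
    fix a b :: "'a fps \<times> 'a fps" assume "a \<in> J_carrier" "b \<in> J_carrier"
    then show "a \<otimes>\<^bsub>SR_group\<^esub> b \<in> J_carrier"
      by (cases a, cases b) (auto simp: J_mem SR_mult compose_nth1')
  qed
qed

lemma J_group_eq: "J_group = (SR_group :: ('a::comm_ring_1 fps \<times> 'a fps) monoid)\<lparr>carrier := J_carrier\<rparr>"
  by (simp add: riordan_group_on_def)




lemma additive_comm_group: "comm_group (additive_group :: ('a::comm_ring_1) monoid)"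
proof (rule comm_groupI)
  fix x :: 'a
  show "\<exists>y\<in>carrier additive_group. y \<otimes>\<^bsub>additive_group\<^esub> x = \<one>\<^bsub>additive_group\<^esub>"
    by (rule bexI[of _ "-x"]) (simp_all add: additive_group_def)
qed (auto simp: additive_group_def algebra_simps)

lemma commutator_in_derived:
  fixes G (structure)
  assumes "group G" "a \<in> carrier G" "b \<in> carrier G" "x \<in> carrier G"
    and "x \<otimes>\<^bsub>G\<^esub> (b \<otimes>\<^bsub>G\<^esub> a) = a \<otimes>\<^bsub>G\<^esub> b"
  shows "x \<in> derived G (carrier G)"
proof -
  interpret group G by fact
  have "x = a \<otimes> b \<otimes> inv (b \<otimes> a)"
    using assms(2-5) by (metis inv_solve_right m_closed)
  also have "\<dots> = a \<otimes> b \<otimes> inv a \<otimes> inv b"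
    using assms(2-3) by (simp add: inv_mult_group m_assoc)
  finally have "x \<in> derived_set G (carrier G)" using assms(2,3) by blast
  then show ?thesis unfolding derived_def by (rule generate.incl)
qed

lemma SA_commutator:
  fixes g :: "'a::comm_ring_1 fps"
  assumes g0: "g$0 = 1" and g1: "g$1 = 0"
  shows "(g, fps_X) \<in> derived SR_group (carrier SR_group)"
proof -
  define v where "v = fps_right_inverse g 1"
  have gv: "g * v = 1" unfolding v_def by (rule fps_right_inverse) (simp add: g0)
  have v0: "v$0 = 1" by (simp add: v_def)
  have "(g * v)$1 = 0" using gv by simp
  then have v1: "v$1 = 0" using g0 g1 v0 by (simp add: fps_mult_nth_1)
  define u where "u = (1 + fps_X) * v"
  have gu: "g * u = 1 + fps_X" by (simp add: u_def gv mult.left_commute[of g])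
  define f where "f = u - 1"
  have f0: "f$0 = 0" using v0 by (simp add: f_def u_def)
  have f1: "f$1 = 1" using v0 v1 by (simp add: f_def u_def fps_mult_nth_1)
  define a where "a = ((1 :: 'a fps) + fps_X, fps_X :: 'a fps)"
  define b where "b = ((1 :: 'a fps), f)"
  have aC: "a \<in> carrier SR_group" by (simp add: a_def SR_carrier_eq SR_mem)
  have bC: "b \<in> carrier SR_group" using f0 f1 by (simp add: b_def SR_carrier_eq SR_mem)
  have xC: "(g, fps_X) \<in> carrier SR_group" using g0 by (simp add: SR_carrier_eq SR_mem)
  have comp: "(1 + fps_X) oo f = 1 + f" using f0 by (simp add: fps_compose_add_distrib)
  have ba: "b \<otimes>\<^bsub>SR_group\<^esub> a = (1 + f, f)" using f0 by (simp add: a_def b_def SR_mult comp)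
  have "(g, fps_X) \<otimes>\<^bsub>SR_group\<^esub> (b \<otimes>\<^bsub>SR_group\<^esub> a) = (g * (1 + f), f)"
    by (simp add: ba SR_mult)
  also have "\<dots> = (1 + fps_X, f)" using gu by (simp add: f_def)
  also have "\<dots> = a \<otimes>\<^bsub>SR_group\<^esub> b" by (simp add: a_def b_def SR_mult)
  finally show ?thesis
    by (rule commutator_in_derived[OF SR_group_is_group aC bC xC])
qed

definition alphaR :: "('a::comm_ring_1 fps \<times> 'a fps) \<Rightarrow> 'a" where
  "alphaR p = fst p $ 1"

definition rhoR :: "('a::comm_ring_1 fps \<times> 'a fps) \<Rightarrow> ('a fps \<times> 'a fps)" where
  "rhoR p = (1, snd p)"

lemma alphaR_hom: "alphaR \<in> hom (SR_group :: ('a::comm_ring_1 fps \<times> 'a fps) monoid) additive_group"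
proof (rule homI)
  fix x y :: "'a fps \<times> 'a fps"
  assume "x \<in> carrier SR_group" "y \<in> carrier SR_group"
  then show "alphaR (x \<otimes>\<^bsub>SR_group\<^esub> y) = alphaR x \<otimes>\<^bsub>additive_group\<^esub> alphaR y"
    by (cases x, cases y)
       (clarsimp simp add: SR_mult SR_carrier_eq SR_mem alphaR_def additive_group_def compose_nth1')
qed (simp add: additive_group_def)

lemma alphaR_surj: "alphaR ` carrier (SR_group :: ('a::comm_ring_1 fps \<times> 'a fps) monoid) = carrier additive_group"
proof -
  have "d \<in> alphaR ` carrier (SR_group :: ('a fps \<times> 'a fps) monoid)" for d :: 'a
  proof
    show "d = alphaR (1 + fps_const d * fps_X, fps_X)" by (simp add: alphaR_def)
    show "(1 + fps_const d * fps_X, fps_X) \<in> carrier (SR_group :: ('a fps \<times> 'a fps) monoid)"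
      by (simp add: SR_carrier_eq SR_mem)
  qed
  then show ?thesis by (auto simp: additive_group_def)
qed

lemma rhoR_hom: "rhoR \<in> hom (SR_group :: ('a::comm_ring_1 fps \<times> 'a fps) monoid) (SR_group\<lparr>carrier := J_carrier\<rparr>)"
proof (rule homI)
  fix x :: "'a fps \<times> 'a fps"
  assume "x \<in> carrier SR_group"
  then show "rhoR x \<in> carrier (SR_group\<lparr>carrier := J_carrier\<rparr>)"
    by (cases x) (simp add: SR_carrier_eq SR_mem J_mem rhoR_def)
next
  fix x y :: "'a fps \<times> 'a fps"
  assume "x \<in> carrier SR_group" "y \<in> carrier SR_group"
  then show "rhoR (x \<otimes>\<^bsub>SR_group\<^esub> y) = rhoR x \<otimes>\<^bsub>SR_group\<lparr>carrier := J_carrier\<rparr>\<^esub> rhoR y"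
    by (cases x, cases y) (simp add: riordan_group_on_def riordan_mult_def rhoR_def)
qed

theorem part2:
  "abelianization (SR_group :: ('a::comm_ring_1 fps \<times> 'a fps) monoid)
     \<cong> (additive_group :: 'a monoid) \<times>\<times> abelianization (J_group :: ('a fps \<times> 'a fps) monoid)"
  unfolding J_group_eq
proof (rule abel_decomp[OF SR_group_is_group J_subgroup additive_comm_group alphaR_hom alphaR_surj rhoR_hom])
  fix x :: "'a fps \<times> 'a fps"
  assume "x \<in> J_carrier"
  then show "rhoR x = x" "alphaR x = \<one>\<^bsub>additive_group\<^esub>"
    by (cases x, simp add: J_mem rhoR_def alphaR_def additive_group_def)+
next
  fix x :: "'a fps \<times> 'a fps"
  assume x: "x \<in> carrier SR_group" and a: "alphaR x = \<one>\<^bsub>additive_group\<^esub>"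
    and r: "rhoR x = \<one>\<^bsub>SR_group\<^esub>"
  obtain g f where xe: "x = (g, f)" by (cases x)
  have "f = fps_X" using r by (simp add: xe rhoR_def SR_one)
  moreover have "g$0 = 1" using x by (simp add: xe SR_carrier_eq SR_mem)
  moreover have "g$1 = 0" using a by (simp add: xe alphaR_def additive_group_def)
  ultimately show "x \<in> derived SR_group (carrier SR_group)"
    using SA_commutator xe by blast
qed




lemma compose_trunc:
  fixes h f :: "'a::comm_ring_1 fps"
  assumes f0: "f$0 = 0" and m: "m \<le> N"
  shows "(h oo f)$m = (\<Sum>k=0..N. fps_const (h$k) * f^k)$m"
proof -
  have "(h oo f)$m = (\<Sum>k=0..m. h$k * (f^k)$m)" by (simp add: fps_compose_nth)
  also have "\<dots> = (\<Sum>k=0..N. h$k * (f^k)$m)"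
    by (rule sum.mono_neutral_left) (use m startsby_zero_power_prefix[OF f0] in auto)
  also have "\<dots> = (\<Sum>k=0..N. fps_const (h$k) * f^k)$m" by (simp add: fps_sum_nth)
  finally show ?thesis .
qed

lemma mult_nth_cong:
  fixes g a b :: "'a::comm_ring_1 fps"
  assumes "\<And>m. m \<le> i \<Longrightarrow> a$m = b$m"
  shows "(g * a)$i = (g * b)$i"
  using assms by (simp add: fps_mult_nth)

lemma mult_sum_nth:
  fixes g f :: "'a::comm_ring_1 fps"
  shows "(g * (\<Sum>k\<in>S. fps_const (c k) * f^k))$i = (\<Sum>k\<in>S. c k * (g * f^k)$i)"
  by (simp add: sum_distrib_left fps_sum_nth mult.left_commute[of g])

lemma mult_compose_nth:
  fixes g h f :: "'a::comm_ring_1 fps"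
  assumes f0: "f$0 = 0" and i: "i \<le> N"
  shows "(g * (h oo f))$i = (\<Sum>k=0..N. h$k * (g * f^k)$i)"
proof -
  have "(g * (h oo f))$i = (g * (\<Sum>k=0..N. fps_const (h$k) * f^k))$i"
  proof (rule mult_nth_cong)
    fix m assume "m \<le> i"
    then show "(h oo f)$m = (\<Sum>k=0..N. fps_const (h$k) * f^k)$m"
      using compose_trunc[OF f0, of m N h] i by simp
  qed
  also have "\<dots> = (\<Sum>k=0..N. h$k * (g * f^k)$i)" by (rule mult_sum_nth)
  finally show ?thesis .
qed

lemma trunc_hom_eq:
  fixes p q :: "'a::comm_ring_1 fps \<times> 'a fps"
  assumes f0: "snd p $ 0 = 0" and f0': "snd q $ 0 = 0"
  shows "riordan_trunc n (riordan_mult p q) = trunc_mat_mult n (riordan_trunc n p) (riordan_trunc n q)"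
proof -
  obtain g1 f1 g2 f2 where pe: "p = (g1, f1)" and qe: "q = (g2, f2)" by (cases p, cases q)
  have f10: "f1$0 = 0" using f0 pe by simp
  show ?thesis
  proof (intro ext)
    fix i j
    show "riordan_trunc n (riordan_mult p q) i j = trunc_mat_mult n (riordan_trunc n p) (riordan_trunc n q) i j"
    proof (cases "i \<le> n \<and> j \<le> n")
      case True
      have "(g1 * (g2 oo f1) * (f2 oo f1)^j) = g1 * ((g2 * f2^j) oo f1)"
        by (simp add: fps_compose_power'[OF f10] fps_compose_mult_distrib'[OF f10] mult.assoc)
      then have "(g1 * (g2 oo f1) * (f2 oo f1)^j)$i = (\<Sum>k=0..n. (g2 * f2^j)$k * (g1 * f1^k)$i)"
        using mult_compose_nth[OF f10, of i n g1 "g2 * f2^j"] True by simp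
      also have "\<dots> = (\<Sum>k\<le>n. riordan_trunc n p i k * riordan_trunc n q k j)"
        using True by (simp add: atMost_atLeast0 riordan_trunc_def pe qe mult.commute)
      finally show ?thesis using True
        by (simp add: riordan_trunc_def trunc_mat_mult_def riordan_mult_def pe qe)
    next
      case False
      then show ?thesis by (auto simp: riordan_trunc_def trunc_mat_mult_def)
    qed
  qed
qed

lemma trunc_one: "riordan_trunc n (1, fps_X) = (trunc_mat_one n :: nat \<Rightarrow> nat \<Rightarrow> 'a::comm_ring_1)"
  by (rule ext)+ (simp add: riordan_trunc_def trunc_mat_one_def)

lemma trunc_hom: "riordan_trunc n \<in> hom (SR_group :: ('a::comm_ring_1 fps \<times> 'a fps) monoid) (TSR n)"
proof (rule homI)
  fix x :: "'a fps \<times> 'a fps" assume "x \<in> carrier SR_group"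
  then show "riordan_trunc n x \<in> carrier (TSR n)" by (simp add: trunc_group_def SR_carrier_eq)
next
  fix x y :: "'a fps \<times> 'a fps" assume "x \<in> carrier SR_group" "y \<in> carrier SR_group"
  then show "riordan_trunc n (x \<otimes>\<^bsub>SR_group\<^esub> y) = riordan_trunc n x \<otimes>\<^bsub>TSR n\<^esub> riordan_trunc n y"
    using trunc_hom_eq[of x y n]
    by (cases x, cases y) (simp add: SR_carrier_eq SR_mem riordan_group_on_def trunc_group_def)
qed

lemma TSR_group: "group (TSR n :: (nat \<Rightarrow> nat \<Rightarrow> 'a::comm_ring_1) monoid)"
proof -
  interpret G: group "SR_group :: ('a fps \<times> 'a fps) monoid" by (rule SR_group_is_group)
  have "group ((TSR n :: (nat \<Rightarrow> nat \<Rightarrow> 'a) monoid)\<lparr>carrier := riordan_trunc n ` carrier (SR_group :: ('a fps \<times> 'a fps) monoid),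
      one := riordan_trunc n \<one>\<^bsub>(SR_group :: ('a fps \<times> 'a fps) monoid)\<^esub>\<rparr>)"
    by (rule G.hom_imp_img_group[OF trunc_hom])
  moreover have "(TSR n :: (nat \<Rightarrow> nat \<Rightarrow> 'a) monoid)\<lparr>carrier := riordan_trunc n ` carrier (SR_group :: ('a fps \<times> 'a fps) monoid),
      one := riordan_trunc n \<one>\<^bsub>(SR_group :: ('a fps \<times> 'a fps) monoid)\<^esub>\<rparr> = TSR n"
    by (simp add: trunc_group_def SR_carrier_eq SR_one trunc_one)
  ultimately show ?thesis by simp
qed

lemma trunc_group_hom: "group_hom (SR_group :: ('a::comm_ring_1 fps \<times> 'a fps) monoid) (TSR n) (riordan_trunc n)"
  unfolding group_hom_def group_hom_axioms_def using SR_group_is_group TSR_group trunc_hom by auto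

lemma TJ_subgroup: "subgroup (riordan_trunc n ` J_carrier) (TSR n :: (nat \<Rightarrow> nat \<Rightarrow> 'a::comm_ring_1) monoid)"
  using group_hom.subgroup_img_is_subgroup[OF trunc_group_hom J_subgroup] .

lemma TJ_eq: "(TJ n :: (nat \<Rightarrow> nat \<Rightarrow> 'a::comm_ring_1) monoid) = (TSR n)\<lparr>carrier := riordan_trunc n ` J_carrier\<rparr>"
  by (simp add: trunc_group_def)




definition colmat :: "nat \<Rightarrow> (nat \<Rightarrow> nat \<Rightarrow> 'a::comm_ring_1) \<Rightarrow> (nat \<Rightarrow> nat \<Rightarrow> 'a)" where
  "colmat n M = (\<lambda>i j. if i \<le> n \<and> j \<le> n \<and> j \<le> i then M (i - j) 0 else 0)"

definition rhoT :: "nat \<Rightarrow> (nat \<Rightarrow> nat \<Rightarrow> 'a::comm_ring_1) \<Rightarrow> (nat \<Rightarrow> nat \<Rightarrow> 'a)" where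
  "rhoT n M = inv\<^bsub>TSR n\<^esub> (colmat n M) \<otimes>\<^bsub>TSR n\<^esub> M"

definition alphaT :: "(nat \<Rightarrow> nat \<Rightarrow> 'a::comm_ring_1) \<Rightarrow> 'a" where
  "alphaT M = M 1 0"

lemma colmat_trunc: "colmat n (riordan_trunc n (g, f)) = riordan_trunc n (g :: 'a::comm_ring_1 fps, fps_X)"
  by (rule ext)+ (auto simp: colmat_def riordan_trunc_def fps_X_power_mult_right_nth)

lemma SR_split:
  assumes "(g, f) \<in> (SR_carrier :: ('a::comm_ring_1 fps \<times> 'a fps) set)"
  shows "(g, fps_X) \<otimes>\<^bsub>SR_group\<^esub> (1, f) = (g, f)"
        "(g, fps_X) \<in> carrier SR_group" "(1, f) \<in> carrier SR_group"
  using assms by (simp_all add: SR_mult SR_carrier_eq SR_mem)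

lemma rhoT_trunc:
  assumes p: "p \<in> (SR_carrier :: ('a::comm_ring_1 fps \<times> 'a fps) set)"
  shows "rhoT n (riordan_trunc n p) = riordan_trunc n (rhoR p)"
proof -
  interpret h: group_hom "SR_group :: ('a fps \<times> 'a fps) monoid" "TSR n" "riordan_trunc n"
    by (rule trunc_group_hom)
  obtain g f where pe: "p = (g, f)" by (cases p)
  note sp = SR_split[OF p[unfolded pe]]
  have a: "riordan_trunc n (g, fps_X) \<in> carrier (TSR n)" using sp(2) by simp
  have b: "riordan_trunc n (1, f) \<in> carrier (TSR n)" using sp(3) by simp
  have eq: "riordan_trunc n p = riordan_trunc n (g, fps_X) \<otimes>\<^bsub>TSR n\<^esub> riordan_trunc n (1, f)"
    using h.hom_mult[OF sp(2) sp(3)] sp(1) pe by simp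
  have "rhoT n (riordan_trunc n p) = inv\<^bsub>TSR n\<^esub> (riordan_trunc n (g, fps_X)) \<otimes>\<^bsub>TSR n\<^esub> riordan_trunc n p"
    by (simp only: rhoT_def pe colmat_trunc)
  also have "\<dots> = inv\<^bsub>TSR n\<^esub> (riordan_trunc n (g, fps_X)) \<otimes>\<^bsub>TSR n\<^esub>
      (riordan_trunc n (g, fps_X) \<otimes>\<^bsub>TSR n\<^esub> riordan_trunc n (1, f))"
    using eq by simp
  also have "\<dots> = riordan_trunc n (1, f)"
    using a b by (simp add: h.H.m_assoc[symmetric] h.H.l_inv)
  finally show ?thesis by (simp add: pe rhoR_def)
qed

lemma alphaT_trunc:
  assumes "n \<ge> 1"
  shows "alphaT (riordan_trunc n p) = alphaR (p :: 'a::comm_ring_1 fps \<times> 'a fps)"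
  using assms by (simp add: alphaT_def riordan_trunc_def alphaR_def)

theorem part1b:
  assumes n: "n \<ge> 1"
  shows "abelianization (TSR n :: (nat \<Rightarrow> nat \<Rightarrow> 'a::comm_ring_1) monoid)
     \<cong> (additive_group :: 'a monoid) \<times>\<times> abelianization (TJ n :: (nat \<Rightarrow> nat \<Rightarrow> 'a) monoid)"
  unfolding TJ_eq
proof (rule abel_decomp[OF TSR_group TJ_subgroup additive_comm_group])
  interpret S: group "SR_group :: ('a fps \<times> 'a fps) monoid" by (rule SR_group_is_group)
  interpret h: group_hom "SR_group :: ('a fps \<times> 'a fps) monoid" "TSR n" "riordan_trunc n"
    by (rule trunc_group_hom)
  have cT: "carrier (TSR n :: (nat \<Rightarrow> nat \<Rightarrow> 'a) monoid) = riordan_trunc n ` carrier SR_group"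
    by (simp add: trunc_group_def SR_carrier_eq)
  have alR: "group_hom (SR_group :: ('a fps \<times> 'a fps) monoid) additive_group alphaR"
    unfolding group_hom_def group_hom_axioms_def
    using SR_group_is_group alphaR_hom[where 'a='a] additive_comm_group[where 'a='a] by (simp add: comm_group_def)
  have rhR: "group_hom (SR_group :: ('a fps \<times> 'a fps) monoid) (SR_group\<lparr>carrier := J_carrier\<rparr>) rhoR"
    unfolding group_hom_def group_hom_axioms_def
    using SR_group_is_group rhoR_hom S.subgroup_imp_group[OF J_subgroup] by blast
  show "alphaT \<in> hom (TSR n) (additive_group :: 'a monoid)"
  proof (rule homI)
    fix x y assume "x \<in> carrier (TSR n :: (nat \<Rightarrow> nat \<Rightarrow> 'a) monoid)" "y \<in> carrier (TSR n :: (nat \<Rightarrow> nat \<Rightarrow> 'a) monoid)"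
    then obtain p q where p: "p \<in> carrier SR_group" and q: "q \<in> carrier SR_group"
      and xe: "x = riordan_trunc n p" and ye: "y = riordan_trunc n q" unfolding cT by auto
    have "alphaT (x \<otimes>\<^bsub>TSR n\<^esub> y) = alphaR (p \<otimes>\<^bsub>SR_group\<^esub> q)"
      using h.hom_mult[OF p q, symmetric] xe ye alphaT_trunc[OF n] by simp
    also have "\<dots> = alphaR p \<otimes>\<^bsub>additive_group\<^esub> alphaR q" using group_hom.hom_mult[OF alR p q] .
    moreover have "alphaT x = alphaR p" "alphaT y = alphaR q"
      using xe ye alphaT_trunc[OF n, of p] alphaT_trunc[OF n, of q] by simp_all
    ultimately show "alphaT (x \<otimes>\<^bsub>TSR n\<^esub> y) = alphaT x \<otimes>\<^bsub>additive_group\<^esub> alphaT y"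
      by simp
  qed (simp add: additive_group_def)
  show "alphaT ` carrier (TSR n) = carrier (additive_group :: 'a monoid)"
    unfolding cT image_image alphaT_trunc[OF n] by (rule alphaR_surj)
  show "rhoT n \<in> hom (TSR n) ((TSR n :: (nat \<Rightarrow> nat \<Rightarrow> 'a) monoid)\<lparr>carrier := riordan_trunc n ` J_carrier\<rparr>)"
  proof (rule homI)
    fix x assume "x \<in> carrier (TSR n :: (nat \<Rightarrow> nat \<Rightarrow> 'a) monoid)"
    then obtain p where p: "p \<in> carrier SR_group" and xe: "x = riordan_trunc n p" unfolding cT by auto
    have "rhoR p \<in> J_carrier" using rhoR_hom p by (auto simp: hom_def)
    moreover have "rhoT n x = riordan_trunc n (rhoR p)"
      using rhoT_trunc[of p n] p xe by (simp add: SR_carrier_eq)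
    ultimately show "rhoT n x \<in> carrier ((TSR n)\<lparr>carrier := riordan_trunc n ` J_carrier\<rparr>)"
      by simp
  next
    fix x y assume "x \<in> carrier (TSR n :: (nat \<Rightarrow> nat \<Rightarrow> 'a) monoid)" "y \<in> carrier (TSR n :: (nat \<Rightarrow> nat \<Rightarrow> 'a) monoid)"
    then obtain p q where p: "p \<in> carrier SR_group" and q: "q \<in> carrier SR_group"
      and xe: "x = riordan_trunc n p" and ye: "y = riordan_trunc n q" unfolding cT by auto
    have pq: "p \<otimes>\<^bsub>SR_group\<^esub> q \<in> carrier SR_group" using p q by simp
    have rp: "rhoR p \<in> carrier SR_group" and rq: "rhoR q \<in> carrier SR_group"
      using rhoR_hom p q J_sub_SR by (auto simp: hom_def SR_carrier_eq)
    have "x \<otimes>\<^bsub>TSR n\<^esub> y = riordan_trunc n (p \<otimes>\<^bsub>SR_group\<^esub> q)"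
      using h.hom_mult[OF p q] xe ye by simp
    then have "rhoT n (x \<otimes>\<^bsub>TSR n\<^esub> y) = riordan_trunc n (rhoR (p \<otimes>\<^bsub>SR_group\<^esub> q))"
      using rhoT_trunc[of "p \<otimes>\<^bsub>SR_group\<^esub> q" n] pq by (simp add: SR_carrier_eq)
    also have "\<dots> = riordan_trunc n (rhoR p \<otimes>\<^bsub>SR_group\<^esub> rhoR q)"
      using group_hom.hom_mult[OF rhR p q] by (simp add: riordan_group_on_def)
    also have "\<dots> = riordan_trunc n (rhoR p) \<otimes>\<^bsub>TSR n\<^esub> riordan_trunc n (rhoR q)"
      using h.hom_mult[OF rp rq] .
    finally show "rhoT n (x \<otimes>\<^bsub>TSR n\<^esub> y) = rhoT n x \<otimes>\<^bsub>(TSR n)\<lparr>carrier := riordan_trunc n ` J_carrier\<rparr>\<^esub> rhoT n y"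
      using xe ye rhoT_trunc[of p n] rhoT_trunc[of q n] p q by (simp add: SR_carrier_eq)
  qed
next
  fix x :: "nat \<Rightarrow> nat \<Rightarrow> 'a"
  assume "x \<in> riordan_trunc n ` J_carrier"
  then obtain p where p: "p \<in> J_carrier" and xe: "x = riordan_trunc n p" by auto
  have pS: "p \<in> SR_carrier" using p J_sub_SR by auto
  show "rhoT n x = x" using p xe rhoT_trunc[OF pS] by (cases p) (simp add: J_mem rhoR_def)
  show "alphaT x = \<one>\<^bsub>additive_group\<^esub>" using p xe
    by (cases p) (simp add: J_mem alphaR_def additive_group_def alphaT_trunc[OF n])
next
  fix x :: "nat \<Rightarrow> nat \<Rightarrow> 'a"
  assume x: "x \<in> carrier (TSR n)" and a: "alphaT x = \<one>\<^bsub>additive_group\<^esub>" and r: "rhoT n x = \<one>\<^bsub>TSR n\<^esub>"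
  interpret S: group "SR_group :: ('a fps \<times> 'a fps) monoid" by (rule SR_group_is_group)
  interpret h: group_hom "SR_group :: ('a fps \<times> 'a fps) monoid" "TSR n" "riordan_trunc n"
    by (rule trunc_group_hom)
  obtain g f where p: "(g, f) \<in> SR_carrier" and xe: "x = riordan_trunc n (g, f)"
    using x by (auto simp: trunc_group_def)
  note sp = SR_split[OF p]
  have g0: "g$0 = 1" using p by (simp add: SR_mem)
  have g1: "g$1 = 0" using a xe by (simp add: alphaR_def additive_group_def alphaT_trunc[OF n])
  have "riordan_trunc n (1, f) = \<one>\<^bsub>TSR n\<^esub>" using r rhoT_trunc[OF p] xe by (simp add: rhoR_def)
  then have "x = riordan_trunc n (g, fps_X)"
    using h.hom_mult[OF sp(2) sp(3)] sp(1) xe sp(2) by simp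
  moreover have "riordan_trunc n (g, fps_X) \<in> riordan_trunc n ` derived SR_group (carrier (SR_group :: ('a fps \<times> 'a fps) monoid))"
    using SA_commutator[OF g0 g1] by blast
  moreover have "riordan_trunc n ` derived SR_group (carrier SR_group) = derived (TSR n) (riordan_trunc n ` carrier (SR_group :: ('a fps \<times> 'a fps) monoid))"
    by (rule h.derived_img[symmetric]) simp
  moreover have "riordan_trunc n ` carrier (SR_group :: ('a fps \<times> 'a fps) monoid) = carrier (TSR n)"
    by (simp add: trunc_group_def SR_carrier_eq)
  ultimately show "x \<in> derived (TSR n) (carrier (TSR n))" by simp
qed




lemma trunc_SA_entry:
  "riordan_trunc n (g :: 'a::comm_ring_1 fps, fps_X) i j = (if i \<le> n \<and> j \<le> n then (if i < j then 0 else g$(i-j)) else 0)"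
  by (simp add: riordan_trunc_def fps_X_power_mult_right_nth)

lemma trunc1_SA_eq:
  assumes "g$0 = h$0" "g$1 = (h$1 :: 'a::comm_ring_1)"
  shows "riordan_trunc 1 (g, fps_X) = riordan_trunc 1 (h, fps_X)"
proof (intro ext)
  fix i j :: nat
  show "riordan_trunc 1 (g, fps_X) i j = riordan_trunc 1 (h, fps_X) i j"
    using assms by (cases "i \<le> 1 \<and> j \<le> 1") (auto simp: trunc_SA_entry le_Suc_eq)
qed

definition phiA :: "'a::comm_ring_1 \<Rightarrow> (nat \<Rightarrow> nat \<Rightarrow> 'a)" where
  "phiA d = riordan_trunc 1 (1 + fps_const d * fps_X, fps_X)"

lemma TSA1_iso: "(additive_group :: ('a::comm_ring_1) monoid) \<cong> (TSA 1 :: (nat \<Rightarrow> nat \<Rightarrow> 'a) monoid)"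
proof -
  interpret h: group_hom "SR_group :: ('a fps \<times> 'a fps) monoid" "TSR 1" "riordan_trunc 1"
    by (rule trunc_group_hom)
  have inSR: "(1 + fps_const d * fps_X, fps_X) \<in> carrier (SR_group :: ('a fps \<times> 'a fps) monoid)" for d :: 'a
    by (simp add: SR_carrier_eq SR_mem)
  have hom: "phiA \<in> hom (additive_group :: 'a monoid) (TSA 1)"
  proof (rule homI)
    fix d :: 'a
    show "phiA d \<in> carrier (TSA 1)"
      by (auto simp: phiA_def trunc_group_def SA_carrier_def)
  next
    fix d e :: 'a
    have "phiA d \<otimes>\<^bsub>TSA 1\<^esub> phiA e = phiA d \<otimes>\<^bsub>TSR 1\<^esub> phiA e" by (simp add: trunc_group_def)
    also have "\<dots> = riordan_trunc 1 ((1 + fps_const d * fps_X, fps_X) \<otimes>\<^bsub>SR_group\<^esub> (1 + fps_const e * fps_X, fps_X))"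
      unfolding phiA_def using h.hom_mult[OF inSR inSR] by simp
    also have "\<dots> = riordan_trunc 1 ((1 + fps_const d * fps_X) * (1 + fps_const e * fps_X), fps_X)"
      by (simp add: SR_mult)
    also have "\<dots> = phiA (d + e)" unfolding phiA_def
      by (rule trunc1_SA_eq) (simp_all add: fps_mult_nth_1 algebra_simps)
    finally show "phiA (d \<otimes>\<^bsub>additive_group\<^esub> e) = phiA d \<otimes>\<^bsub>TSA 1\<^esub> phiA e"
      by (simp add: additive_group_def)
  qed
  have val: "phiA d 1 0 = d" for d :: 'a by (simp add: phiA_def trunc_SA_entry)
  have bij: "bij_betw phiA (carrier (additive_group :: 'a monoid)) (carrier (TSA 1))"
  proof (rule bij_betwI')
    fix x y :: 'a
    show "(phiA x = phiA y) = (x = y)"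
    proof
      assume "phiA x = phiA y"
      then have "phiA x 1 0 = phiA y 1 0" by simp
      then show "x = y" by (simp only: val)
    qed simp
  next
    fix x :: 'a show "phiA x \<in> carrier (TSA 1)" using hom by (auto simp: hom_def additive_group_def)
  next
    fix M assume "M \<in> carrier (TSA 1 :: (nat \<Rightarrow> nat \<Rightarrow> 'a) monoid)"
    then obtain g :: "'a fps" where g0: "g$0 = 1" and Me: "M = riordan_trunc 1 (g, fps_X)"
      by (auto simp: trunc_group_def SA_carrier_def)
    have "M = phiA (g$1)" unfolding Me phiA_def by (rule trunc1_SA_eq) (simp_all add: g0)
    then show "\<exists>x\<in>carrier additive_group. M = phiA x" by (auto simp: additive_group_def)
  qed
  have "phiA \<in> iso (additive_group :: 'a monoid) (TSA 1)" unfolding iso_def using hom bij by blast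
  then show ?thesis unfolding is_iso_def by blast
qed

theorem theorem3:
  shows "(\<forall>n::nat. n \<ge> 1 \<longrightarrow>
            abelianization (TSR n :: (nat \<Rightarrow> nat \<Rightarrow> 'a::comm_ring_1) monoid)
              \<cong> (TSA 1 :: (nat \<Rightarrow> nat \<Rightarrow> 'a) monoid) \<times>\<times> abelianization (TJ n :: (nat \<Rightarrow> nat \<Rightarrow> 'a) monoid)
          \<and> abelianization (TSR n :: (nat \<Rightarrow> nat \<Rightarrow> 'a) monoid)
              \<cong> (additive_group :: 'a monoid) \<times>\<times> abelianization (TJ n :: (nat \<Rightarrow> nat \<Rightarrow> 'a) monoid))
       \<and> abelianization (SR_group :: ('a fps \<times> 'a fps) monoid)
           \<cong> (additive_group :: 'a monoid) \<times>\<times> abelianization (J_group :: ('a fps \<times> 'a fps) monoid)"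
proof (intro conjI allI impI)
  show "abelianization (SR_group :: ('a fps \<times> 'a fps) monoid)
           \<cong> (additive_group :: 'a monoid) \<times>\<times> abelianization (J_group :: ('a fps \<times> 'a fps) monoid)"
    by (rule part2)
next
  fix n :: nat assume n: "n \<ge> 1"
  show b: "abelianization (TSR n :: (nat \<Rightarrow> nat \<Rightarrow> 'a) monoid)
              \<cong> (additive_group :: 'a monoid) \<times>\<times> abelianization (TJ n :: (nat \<Rightarrow> nat \<Rightarrow> 'a) monoid)"
    by (rule part1b[OF n])
  have ag: "group (additive_group :: 'a monoid)" using additive_comm_group[where 'a='a] by (simp add: comm_group_def)
  have "(additive_group :: 'a monoid) \<times>\<times> abelianization (TJ n :: (nat \<Rightarrow> nat \<Rightarrow> 'a) monoid)
        \<cong> (TSA 1 :: (nat \<Rightarrow> nat \<Rightarrow> 'a) monoid) \<times>\<times> abelianization (TJ n :: (nat \<Rightarrow> nat \<Rightarrow> 'a) monoid)"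
    by (rule group.DirProd_iso_trans[OF ag TSA1_iso iso_refl])
  then show "abelianization (TSR n :: (nat \<Rightarrow> nat \<Rightarrow> 'a) monoid)
              \<cong> (TSA 1 :: (nat \<Rightarrow> nat \<Rightarrow> 'a) monoid) \<times>\<times> abelianization (TJ n :: (nat \<Rightarrow> nat \<Rightarrow> 'a) monoid)"
    by (rule iso_trans[OF b])
qed



end
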